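(* Let $\mathcal R_Q$ be a nonempty set of rows that has the consecutive-ones property and whose overlap graph is connected, let $(c_1,\ldots,c_m)$ be a consecutive-ones ordering of $\mathcal R_Q$, and let $Z$ be a row not in $\mathcal R_Q$. Then $\mathcal R_Q\cup\{Z\}$ fails to have the consecutive-ones property if and only if one of the following holds: (1) there is a 1-0-1 configuration for $Z$; (2) there is a 0-1-0 configuration for $Z$ and $Z$ contains a column of the unconstrained Venn class of $\mathcal R_Q$.
   Context: Each row is identified with the set of columns in which it has a 1. A consecutive-ones ordering of a set of rows is an ordering of all columns in which each of these rows occupies consecutive columns; the set has the consecutive-ones property if one exists. Two rows overlap if they intersect and neither is a subset of the other; the overlap graph of a set of rows joins overlapping rows. Venn classes of $\mathcal R_Q$: two columns are in the same Venn class if they belong to exactly the same members of $\mathcal R_Q$; the unconstrained Venn class consists of the columns in no member of $\mathcal R_Q$, and all other Venn classes are constrained. A 1-0-1 configuration for $Z$ is a triple of columns $(c_h,c_i,c_j)$ with $h<i<j$ lying in three distinct constrained Venn classes of $\mathcal R_Q$ such that $c_h\in Z$, $c_i\notin Z$, $c_j\in Z$. A 0-1-0 configuration is defined identically except $c_h\notin Z$, $c_i\in Z$, $c_j\notin Z$. *)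

theory Defs
  imports Main
begin

text \<open>Columns are elements of a finite set C of type 'c; a row is identified with
the set of columns in which it has a 1 (a subset of C).\<close>

definition consecutive_in :: "'c list \<Rightarrow> 'c set \<Rightarrow> bool" where
  "consecutive_in cs r \<longleftrightarrow> (\<exists>a b. {k. k < length cs \<and> cs ! k \<in> r} = {a..<b})"

definition c1p_ordering :: "'c set \<Rightarrow> 'c set set \<Rightarrow> 'c list \<Rightarrow> bool" where
  "c1p_ordering C R cs \<longleftrightarrow> distinct cs \<and> set cs = C \<and> (\<forall>r\<in>R. consecutive_in cs r)"

definition has_c1p :: "'c set \<Rightarrow> 'c set set \<Rightarrow> bool" where
  "has_c1p C R \<longleftrightarrow> (\<exists>cs. c1p_ordering C R cs)"

definition overlaps :: "'c set \<Rightarrow> 'c set \<Rightarrow> bool" where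
  "overlaps r s \<longleftrightarrow> r \<inter> s \<noteq> {} \<and> \<not> r \<subseteq> s \<and> \<not> s \<subseteq> r"

definition overlap_graph :: "'c set set \<Rightarrow> ('c set \<times> 'c set) set" where
  "overlap_graph R = {(r, s). r \<in> R \<and> s \<in> R \<and> overlaps r s}"

definition overlap_connected :: "'c set set \<Rightarrow> bool" where
  "overlap_connected R \<longleftrightarrow> (\<forall>r\<in>R. \<forall>s\<in>R. (r, s) \<in> (overlap_graph R)\<^sup>*)"

definition same_venn :: "'c set set \<Rightarrow> 'c \<Rightarrow> 'c \<Rightarrow> bool" where
  "same_venn R c d \<longleftrightarrow> (\<forall>r\<in>R. c \<in> r \<longleftrightarrow> d \<in> r)"

definition constrained :: "'c set set \<Rightarrow> 'c \<Rightarrow> bool" where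
  "constrained R c \<longleftrightarrow> (\<exists>r\<in>R. c \<in> r)"

definition unconstrained_class :: "'c set \<Rightarrow> 'c set set \<Rightarrow> 'c set" where
  "unconstrained_class C R = {c \<in> C. \<forall>r\<in>R. c \<notin> r}"

definition three_constrained_classes :: "'c set set \<Rightarrow> 'c \<Rightarrow> 'c \<Rightarrow> 'c \<Rightarrow> bool" where
  "three_constrained_classes R x y z \<longleftrightarrow>
     constrained R x \<and> constrained R y \<and> constrained R z \<and>
     \<not> same_venn R x y \<and> \<not> same_venn R x z \<and> \<not> same_venn R y z"

definition config_101 :: "'c set set \<Rightarrow> 'c list \<Rightarrow> 'c set \<Rightarrow> bool" where
  "config_101 R cs Z \<longleftrightarrow> (\<exists>h i j. h < i \<and> i < j \<and> j < length cs \<and>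
     three_constrained_classes R (cs ! h) (cs ! i) (cs ! j) \<and>
     cs ! h \<in> Z \<and> cs ! i \<notin> Z \<and> cs ! j \<in> Z)"

definition config_010 :: "'c set set \<Rightarrow> 'c list \<Rightarrow> 'c set \<Rightarrow> bool" where
  "config_010 R cs Z \<longleftrightarrow> (\<exists>h i j. h < i \<and> i < j \<and> j < length cs \<and>
     three_constrained_classes R (cs ! h) (cs ! i) (cs ! j) \<and>
     cs ! h \<notin> Z \<and> cs ! i \<in> Z \<and> cs ! j \<notin> Z)"

end

theory Submission
  imports Defs "HOL-Library.Product_Lexorder"
begin

definition pos :: "'a list \<Rightarrow> 'a \<Rightarrow> nat" where
  "pos xs a = (LEAST i. i < length xs \<and> xs ! i = a)"

lemma pos_nth: assumes "distinct xs" "i < length xs" shows "pos xs (xs ! i) = i"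
  unfolding pos_def
proof (rule Least_equality)
  show "i < length xs \<and> xs ! i = xs ! i" using assms by simp
next
  fix j assume "j < length xs \<and> xs ! j = xs ! i"
  then have "j = i" using assms nth_eq_iff_index_eq by blast
  then show "i \<le> j" by simp
qed

lemma pos_props: assumes "a \<in> set xs" shows "pos xs a < length xs \<and> xs ! pos xs a = a"
proof -
  obtain i where i: "i < length xs" "xs ! i = a" using assms by (auto simp: in_set_conv_nth)
  show ?thesis unfolding pos_def
    using LeastI[of "\<lambda>i. i < length xs \<and> xs ! i = a" i] i by simp
qed

lemma pos_inj: "a \<in> set xs \<Longrightarrow> b \<in> set xs \<Longrightarrow> pos xs a = pos xs b \<Longrightarrow> a = b"
proof -
  assume h: "a \<in> set xs" "b \<in> set xs" "pos xs a = pos xs b"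
  have "a = xs ! pos xs a" using pos_props[OF h(1)] by simp
  also have "\<dots> = xs ! pos xs b" using h(3) by simp
  also have "\<dots> = b" using pos_props[OF h(2)] by simp
  finally show "a = b" .
qed

definition conv :: "'a list \<Rightarrow> 'a set \<Rightarrow> bool" where
  "conv xs r \<longleftrightarrow> (\<forall>a b c. a \<in> r \<longrightarrow> c \<in> r \<longrightarrow> a \<in> set xs \<longrightarrow> b \<in> set xs \<longrightarrow> c \<in> set xs \<longrightarrow>
       pos xs a < pos xs b \<longrightarrow> pos xs b < pos xs c \<longrightarrow> b \<in> r)"

definition btw :: "'a list \<Rightarrow> 'a \<Rightarrow> 'a \<Rightarrow> 'a \<Rightarrow> bool" where
  "btw xs a b c \<longleftrightarrow> (pos xs a < pos xs b \<and> pos xs b < pos xs c) \<or> (pos xs c < pos xs b \<and> pos xs b < pos xs a)"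

lemma conv_btw: "conv xs r \<Longrightarrow> a \<in> r \<Longrightarrow> c \<in> r \<Longrightarrow> a \<in> set xs \<Longrightarrow> b \<in> set xs \<Longrightarrow> c \<in> set xs
   \<Longrightarrow> btw xs a b c \<Longrightarrow> b \<in> r"
  unfolding btw_def
  apply (elim disjE conjE)
   apply (rule conv_def[THEN iffD1, rule_format, of xs r a c b]; assumption)
  apply (rule conv_def[THEN iffD1, rule_format, of xs r c a b]; assumption)
  done

lemma consec_conv: assumes "distinct xs" "consecutive_in xs r" shows "conv xs r"
proof -
  obtain lo hi where S: "{k. k < length xs \<and> xs ! k \<in> r} = {lo..<hi}"
    using assms(2) unfolding consecutive_in_def by blast
  have mem: "k \<in> {lo..<hi} \<longleftrightarrow> k < length xs \<and> xs ! k \<in> r" for k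
    using S by blast
  show ?thesis unfolding conv_def
  proof (intro allI impI)
    fix a b c assume h: "a \<in> r" "c \<in> r" "a \<in> set xs" "b \<in> set xs" "c \<in> set xs"
      "pos xs a < pos xs b" "pos xs b < pos xs c"
    have pa: "pos xs a < length xs" "xs ! pos xs a = a" using pos_props[OF h(3)] by auto
    have pb: "pos xs b < length xs" "xs ! pos xs b = b" using pos_props[OF h(4)] by auto
    have pc: "pos xs c < length xs" "xs ! pos xs c = c" using pos_props[OF h(5)] by auto
    have "pos xs a \<in> {lo..<hi}" using mem[of "pos xs a"] pa h(1) by simp
    moreover have "pos xs c \<in> {lo..<hi}" using mem[of "pos xs c"] pc h(2) by simp
    ultimately have "pos xs b \<in> {lo..<hi}" using h(6,7) by simp
    then have "xs ! pos xs b \<in> r" using mem[of "pos xs b"] by blast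
    then show "b \<in> r" using pb by simp
  qed
qed

lemma conv_consec: assumes "distinct xs" "conv xs r" shows "consecutive_in xs r"
proof -
  define S where "S = {k. k < length xs \<and> xs ! k \<in> r}"
  have fin: "finite S" unfolding S_def by auto
  show ?thesis
  proof (cases "S = {}")
    case True then show ?thesis unfolding consecutive_in_def S_def by (intro exI[of _ 0]) auto
  next
    case False
    have "S = {Min S..<Suc (Max S)}"
    proof
      show "S \<subseteq> {Min S..<Suc (Max S)}" using fin by (auto simp: less_Suc_eq_le)
      show "{Min S..<Suc (Max S)} \<subseteq> S"
      proof
        fix k assume k: "k \<in> {Min S..<Suc (Max S)}"
        have mi: "Min S \<in> S" and ma: "Max S \<in> S" using fin False by auto
        show "k \<in> S"
        proof (cases "k = Min S \<or> k = Max S")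
          case True then show ?thesis using mi ma by auto
        next
          case F: False
          have lt: "Min S < k" "k < Max S" using k F by auto
          have kl: "k < length xs" using lt ma unfolding S_def by auto
          have "xs ! k \<in> r"
            using assms(2)[unfolded conv_def, rule_format, of "xs ! Min S" "xs ! Max S" "xs ! k"]
              mi ma kl lt pos_nth[OF assms(1)] unfolding S_def by auto
          then show ?thesis using kl unfolding S_def by auto
        qed
      qed
    qed
    then show ?thesis unfolding consecutive_in_def S_def by blast
  qed
qed

lemma overlaps_sym: "overlaps r s = overlaps s r" unfolding overlaps_def by blast

lemma graphD: "(r,s) \<in> overlap_graph R \<Longrightarrow> r \<in> R \<and> s \<in> R \<and> overlaps r s"
  by (simp add: overlap_graph_def)

lemma sv_refl: "same_venn R c c" unfolding same_venn_def by blast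
lemma sv_sym: "same_venn R c d \<Longrightarrow> same_venn R d c" unfolding same_venn_def by blast
lemma sv_trans: "same_venn R c d \<Longrightarrow> same_venn R d e \<Longrightarrow> same_venn R c e" unfolding same_venn_def by blast
lemma sv_constr: "same_venn R c d \<Longrightarrow> constrained R d \<Longrightarrow> constrained R c"
  unfolding same_venn_def constrained_def by blast

lemma btw_split:
  assumes "btw xs a b c" "pos xs b \<noteq> pos xs d"
  shows "btw xs a b d \<or> btw xs d b c"
  using assms unfolding btw_def by arith

lemma btw_irr: "\<not> btw xs a a c" unfolding btw_def by auto

locale ord1 =
  fixes C :: "'c set" and R :: "'c set set" and xs :: "'c list"
  assumes dist: "distinct xs" and setx: "set xs = C" and RC: "\<And>r. r \<in> R \<Longrightarrow> r \<subseteq> C"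
    and cv: "\<And>r. r \<in> R \<Longrightarrow> conv xs r" and conn: "overlap_connected R"
begin

lemma connD: "r \<in> R \<Longrightarrow> s \<in> R \<Longrightarrow> (r,s) \<in> (overlap_graph R)\<^sup>*"
  using conn unfolding overlap_connected_def by blast

lemma pos_ne: "a \<in> C \<Longrightarrow> b \<in> C \<Longrightarrow> a \<noteq> b \<Longrightarrow> pos xs a \<noteq> pos xs b"
  using pos_inj[of a xs b] setx by auto

lemma cbtw: "r \<in> R \<Longrightarrow> a \<in> r \<Longrightarrow> c \<in> r \<Longrightarrow> b \<in> C \<Longrightarrow> btw xs a b c \<Longrightarrow> b \<in> r"
proof -
  assume h: "r \<in> R" "a \<in> r" "c \<in> r" "b \<in> C" "btw xs a b c"
  have "a \<in> set xs" "c \<in> set xs" using RC[OF h(1)] h(2,3) setx by auto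
  then show "b \<in> r" using conv_btw[OF cv[OF h(1)] h(2,3)] h(4,5) setx by blast
qed

lemma union_conv:
  assumes r: "r \<in> R" "a \<in> r" and s: "s \<in> R" "c \<in> s" and b: "b \<in> C" "btw xs a b c"
  shows "constrained R b"
proof -
  have "\<forall>c\<in>s. \<forall>b\<in>C. btw xs a b c \<longrightarrow> constrained R b"
    using connD[OF r(1) s(1)]
  proof (induction rule: rtrancl_induct)
    case base
    then show ?case using cbtw[OF r(1) r(2)] r(1) unfolding constrained_def by blast
  next
    case (step y z)
    have yz: "y \<in> R" "z \<in> R" "overlaps y z" using graphD[OF step(2)] by auto
    obtain d where d: "d \<in> y" "d \<in> z" using yz(3) unfolding overlaps_def by blast
    have dC: "d \<in> C" using RC[OF yz(1)] d by blast
    show ?case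
    proof (intro ballI impI)
      fix c b assume c: "c \<in> z" and bC: "b \<in> C" and bt: "btw xs a b c"
      show "constrained R b"
      proof (cases "b = d")
        case True then show ?thesis using d yz unfolding constrained_def by blast
      next
        case False
        then have "pos xs b \<noteq> pos xs d" using pos_ne bC dC by blast
        then have "btw xs a b d \<or> btw xs d b c" by (rule btw_split[OF bt])
        then show ?thesis
        proof
          assume "btw xs a b d" then show ?thesis using step.IH d bC by blast
        next
          assume "btw xs d b c" then have "b \<in> z" using cbtw[OF yz(2) d(2) c bC] by blast
          then show ?thesis using yz unfolding constrained_def by blast
        qed
      qed
    qed
  qed
  then show ?thesis using s b by blast
qed

lemma contig:
  assumes C3: "a \<in> C" "a' \<in> C" "b \<in> C" and sv: "same_venn R a a'" and ca: "constrained R a"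
    and bt: "btw xs a b a'"
  shows "same_venn R a b"
proof (rule ccontr)
  assume nsv: "\<not> same_venn R a b"
  have ab: "\<forall>r\<in>R. a \<in> r \<longrightarrow> b \<in> r"
  proof (intro ballI impI)
    fix r assume "r \<in> R" "a \<in> r"
    moreover then have "a' \<in> r" using sv unfolding same_venn_def by blast
    ultimately show "b \<in> r" using cbtw bt C3 by blast
  qed
  then obtain t where t: "t \<in> R" "b \<in> t" "a \<notin> t" using nsv unfolding same_venn_def by blast
  then have a't: "a' \<notin> t" using sv unfolding same_venn_def by blast
  have ne: "a \<noteq> a'" using bt btw_irr unfolding btw_def by auto
  have key: "\<forall>e\<in>s. btw xs a e a'" if "(t, s) \<in> (overlap_graph R)\<^sup>*" for s
    using that
  proof (induction rule: rtrancl_induct)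
    case base
    show ?case
    proof
      fix e assume e: "e \<in> t"
      have eC: "e \<in> C" using RC[OF t(1)] e by blast
      have "e \<noteq> a" "e \<noteq> a'" using e t a't by auto
      then have p: "pos xs e \<noteq> pos xs a" "pos xs e \<noteq> pos xs a'" "pos xs a \<noteq> pos xs a'"
        using pos_ne eC C3 ne by auto
      have "\<not> btw xs e a b" using cbtw[OF t(1) e t(2) C3(1)] t(3) by blast
      moreover have "\<not> btw xs e a' b" using cbtw[OF t(1) e t(2) C3(2)] a't by blast
      ultimately show "btw xs a e a'" using bt p unfolding btw_def by arith
    qed
  next
    case (step y z)
    have yz: "y \<in> R" "z \<in> R" "overlaps y z" using graphD[OF step(2)] by auto
    obtain d where d: "d \<in> y" "d \<in> z" using yz(3) unfolding overlaps_def by blast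
    have dC: "d \<in> C" using RC[OF yz(1)] d by blast
    have bd: "btw xs a d a'" using step.IH d by blast
    show ?case
    proof
      fix e assume e: "e \<in> z"
      have eC: "e \<in> C" using RC[OF yz(2)] e by blast
      show "btw xs a e a'"
      proof (rule ccontr)
        assume nb: "\<not> btw xs a e a'"
        have "a \<in> z \<or> a' \<in> z"
        proof (cases "e = a \<or> e = a'")
          case True then show ?thesis using e by blast
        next
          case False
          then have p: "pos xs e \<noteq> pos xs a" "pos xs e \<noteq> pos xs a'"
            using pos_ne eC C3 by auto
          have "btw xs e a d \<or> btw xs e a' d" using bd nb p unfolding btw_def by arith
          then show ?thesis using cbtw[OF yz(2) e d(2)] C3 by blast
        qed
        then have both: "a \<in> z" "a' \<in> z" using sv yz(2) unfolding same_venn_def by blast+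
        have "y \<subseteq> z"
        proof
          fix f assume f: "f \<in> y"
          then have "f \<in> C" using RC[OF yz(1)] by blast
          then show "f \<in> z" using cbtw[OF yz(2) both(1) both(2)] step.IH f by blast
        qed
        then show False using yz(3) unfolding overlaps_def by blast
      qed
    qed
  qed
  obtain r0 where r0: "r0 \<in> R" "a \<in> r0" using ca unfolding constrained_def by blast
  have "btw xs a a a'" using key[OF connD[OF t(1) r0(1)]] r0 by blast
  then show False using btw_irr[of xs a a'] by simp
qed


definition mu :: "'c \<Rightarrow> nat" where
  "mu c = (LEAST p. p < length xs \<and> same_venn R (xs ! p) c)"

lemma mu_props: assumes "c \<in> C"
  shows "mu c \<le> pos xs c \<and> mu c < length xs \<and> same_venn R (xs ! mu c) c"
proof -
  have P: "pos xs c < length xs \<and> same_venn R (xs ! pos xs c) c"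
    using pos_props[of c xs] assms setx sv_refl by metis
  have "mu c \<le> pos xs c" unfolding mu_def by (rule Least_le) (rule P)
  moreover have "mu c < length xs \<and> same_venn R (xs ! mu c) c"
    unfolding mu_def by (rule LeastI) (rule P)
  ultimately show ?thesis by blast
qed

lemma mu_C: "c \<in> C \<Longrightarrow> xs ! mu c \<in> C"
  using mu_props setx nth_mem by metis

lemma pos_mu: "c \<in> C \<Longrightarrow> pos xs (xs ! mu c) = mu c"
  using mu_props pos_nth[OF dist] by metis

lemma mu_eq: assumes "same_venn R c d" shows "mu c = mu d"
proof -
  have "(\<lambda>p. p < length xs \<and> same_venn R (xs ! p) c) = (\<lambda>p. p < length xs \<and> same_venn R (xs ! p) d)"
  proof (rule ext)
    fix p
    show "(p < length xs \<and> same_venn R (xs ! p) c) = (p < length xs \<and> same_venn R (xs ! p) d)"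
      using assms sv_trans[of R "xs!p" c d] sv_trans[of R "xs!p" d c] sv_sym[of R c d] by blast
  qed
  then show ?thesis unfolding mu_def by simp
qed

lemma mu_eq_sv: assumes "c \<in> C" "d \<in> C" "mu c = mu d" shows "same_venn R c d"
proof -
  have "same_venn R (xs ! mu c) c" "same_venn R (xs ! mu d) d" using mu_props assms by blast+
  then show ?thesis using assms(3) sv_trans[OF sv_sym[of R "xs ! mu d" c]] by metis
qed

lemma mu_less:
  assumes C2: "c \<in> C" "d \<in> C" and cd: "constrained R c" "constrained R d"
    and nsv: "\<not> same_venn R c d" and lt: "pos xs c < pos xs d"
  shows "mu c < mu d"
proof (rule ccontr)
  assume "\<not> mu c < mu d"
  then have le: "mu d \<le> mu c" by simp
  define e where "e = xs ! mu d"
  have eC: "e \<in> C" unfolding e_def using mu_C C2 by blast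
  have sve: "same_venn R e d" unfolding e_def using mu_props C2 by blast
  have pe: "pos xs e = mu d" unfolding e_def using pos_mu C2 by blast
  have pc: "mu c \<le> pos xs c" using mu_props C2 by blast
  show False
  proof (cases "pos xs e = pos xs c")
    case True
    then have "e = c" using pos_inj eC C2 setx by metis
    then show False using sve nsv by simp
  next
    case False
    then have "btw xs e c d" using pe le pc lt unfolding btw_def by simp
    moreover have "constrained R e" using sv_constr[OF sve cd(2)] .
    ultimately have "same_venn R e c" using contig[OF eC C2(2) C2(1) sve] by blast
    then show False using sve nsv sv_trans[OF sv_sym[of R e c]] by blast
  qed
qed

lemma mu_mono:
  assumes "c \<in> C" "d \<in> C" "constrained R c" "constrained R d" "pos xs c \<le> pos xs d"
  shows "mu c \<le> mu d"
proof (cases "same_venn R c d")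
  case True then show ?thesis using mu_eq by simp
next
  case False
  then have "c \<noteq> d" using sv_refl by metis
  then have "pos xs c < pos xs d" using assms pos_ne by fastforce
  then show ?thesis using mu_less[OF assms(1-4) False] by simp
qed

lemma mu_less_pos:
  assumes "c \<in> C" "d \<in> C" "constrained R c" "constrained R d" "mu c < mu d"
  shows "pos xs c < pos xs d"
  using mu_mono[OF assms(2,1,4,3)] assms(5) by linarith

lemma ex_edge:
  assumes "constrained R x" "constrained R y" "\<not> same_venn R x y"
  shows "\<exists>r s. r \<in> R \<and> s \<in> R \<and> overlaps r s"
proof -
  obtain r where r: "r \<in> R" "(x \<in> r) \<noteq> (y \<in> r)" using assms(3) unfolding same_venn_def by blast
  have "\<exists>s\<in>R. s \<noteq> r"
  proof (cases "x \<in> r")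
    case True
    then obtain s where "s \<in> R" "y \<in> s" using assms(2) unfolding constrained_def by blast
    then show ?thesis using True r by blast
  next
    case False
    then obtain s where "s \<in> R" "x \<in> s" using assms(1) unfolding constrained_def by blast
    then show ?thesis using False r by blast
  qed
  then obtain s where s: "s \<in> R" "s \<noteq> r" by blast
  from connD[OF r(1) s(1)] s(2) obtain r' where "(r, r') \<in> overlap_graph R"
    by (metis converse_rtranclE)
  then show ?thesis using graphD by blast
qed

lemma three_classes:
  assumes "constrained R x" "constrained R y" "\<not> same_venn R x y"
  shows "\<exists>w\<in>C. constrained R w \<and> \<not> same_venn R w x \<and> \<not> same_venn R w y"
proof -
  obtain r s where rs: "r \<in> R" "s \<in> R" "overlaps r s" using ex_edge[OF assms] by blast
  obtain p1 p2 p3 where p: "p1 \<in> r" "p1 \<notin> s" "p2 \<in> r" "p2 \<in> s" "p3 \<in> s" "p3 \<notin> r"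
    using rs(3) unfolding overlaps_def by blast
  have pC: "p1 \<in> C" "p2 \<in> C" "p3 \<in> C" using p RC rs by blast+
  have pc: "constrained R p1" "constrained R p2" "constrained R p3"
    using p rs unfolding constrained_def by blast+
  have n12: "\<not> same_venn R p1 p2" using p rs(2) unfolding same_venn_def by blast
  have n13: "\<not> same_venn R p1 p3" using p rs(1) unfolding same_venn_def by blast
  have n23: "\<not> same_venn R p2 p3" using p rs(1) unfolding same_venn_def by blast
  show ?thesis
  proof (cases "\<not> same_venn R p1 x \<and> \<not> same_venn R p1 y")
    case True then show ?thesis using pC pc by blast
  next
    case F1: False
    show ?thesis
    proof (cases "\<not> same_venn R p2 x \<and> \<not> same_venn R p2 y")
      case True then show ?thesis using pC pc by blast
    next
      case F2: False
      have "\<not> same_venn R p3 x \<and> \<not> same_venn R p3 y"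
        using F1 F2 n12 n13 n23 sv_trans sv_sym by metis
      then show ?thesis using pC pc by blast
    qed
  qed
qed


lemma Wb:
  assumes rs: "r \<in> R" "s \<in> R" and m: "a \<in> r" "a \<notin> s" "b \<in> r" "b \<in> s" "c \<in> s" "c \<notin> r"
  shows "btw xs a b c"
proof -
  have C3: "a \<in> C" "b \<in> C" "c \<in> C" using RC rs m by blast+
  have ne: "a \<noteq> b" "a \<noteq> c" "b \<noteq> c" using m by auto
  have p: "pos xs a \<noteq> pos xs b" "pos xs a \<noteq> pos xs c" "pos xs b \<noteq> pos xs c"
    using pos_ne C3 ne by auto
  have "\<not> btw xs a c b" using cbtw[OF rs(1) m(1) m(3) C3(3)] m(6) by blast
  moreover have "\<not> btw xs b a c" using cbtw[OF rs(2) m(4) m(5) C3(1)] m(2) by blast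
  ultimately show ?thesis using p unfolding btw_def by arith
qed

end

definition cross :: "'c set \<Rightarrow> 'c set \<Rightarrow> 'c \<Rightarrow> 'c \<Rightarrow> bool" where
  "cross r s a b \<longleftrightarrow> a \<in> r \<union> s \<and> b \<in> r \<union> s \<and> ((a \<in> r) \<noteq> (b \<in> r) \<or> (a \<in> s) \<noteq> (b \<in> s))"

lemma cross_sym: "cross r s a b = cross s r a b" unfolding cross_def by blast

lemma common_cross:
  assumes "overlaps r s" "overlaps s t"
  shows "\<exists>a b. cross r s a b \<and> cross s t a b"
proof -
  obtain p q u w where pq: "p \<in> s" "p \<in> r" "q \<in> s" "q \<notin> r" "u \<in> s" "u \<in> t" "w \<in> s" "w \<notin> t"
    using assms unfolding overlaps_def by blast
  show ?thesis
  proof (cases "(p \<in> t) \<noteq> (q \<in> t)")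
    case True then show ?thesis using pq unfolding cross_def by blast
  next
    case F: False
    show ?thesis
    proof (cases "p \<in> t")
      case True
      then have "q \<in> t" using F by blast
      show ?thesis
      proof (cases "w \<in> r")
        case True then show ?thesis using pq \<open>q \<in> t\<close> unfolding cross_def by blast
      next
        case False then show ?thesis using pq \<open>p \<in> t\<close> unfolding cross_def by blast
      qed
    next
      case False
      then have "q \<notin> t" using F by blast
      show ?thesis
      proof (cases "u \<in> r")
        case True then show ?thesis using pq \<open>q \<notin> t\<close> unfolding cross_def by blast
      next
        case False then show ?thesis using pq \<open>p \<notin> t\<close> unfolding cross_def by blast
      qed
    qed
  qed
qed

locale two_ord = X: ord1 C R xs + Y: ord1 C R ys for C R xs ys
begin

definition agr where "agr a b \<longleftrightarrow> ((pos xs a < pos xs b) = (pos ys a < pos ys b))"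

lemma agr_sym: assumes "a \<in> C" "b \<in> C" "a \<noteq> b" shows "agr a b = agr b a"
proof -
  have "pos xs a \<noteq> pos xs b" "pos ys a \<noteq> pos ys b" using X.pos_ne Y.pos_ne assms by auto
  then show ?thesis unfolding agr_def by auto
qed

lemma W2:
  assumes rs: "r \<in> R" "s \<in> R" and m: "a \<in> r" "a \<notin> s" "b \<in> r" "b \<in> s" "c \<in> s" "c \<notin> r"
  shows "agr a b = agr b c \<and> agr a b = agr a c"
  using X.Wb[OF rs m] Y.Wb[OF rs m] unfolding agr_def btw_def by auto

lemma cross_val:
  assumes rs: "r \<in> R" "s \<in> R" and p: "p1 \<in> r" "p1 \<notin> s" "p2 \<in> r" "p2 \<in> s" "p3 \<in> s" "p3 \<notin> r"
    and cr: "cross r s a b"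
  shows "agr a b = agr p1 p3"
proof -
  have E1: "agr x y = agr x z" and E2: "agr y z = agr x z"
    if "x \<in> r" "x \<notin> s" "y \<in> r" "y \<in> s" "z \<in> s" "z \<notin> r" for x y z
    using W2[OF rs that] by auto
  have A13: "agr x z = agr p1 p3" if "x \<in> r" "x \<notin> s" "z \<in> s" "z \<notin> r" for x z
  proof -
    have "agr x z = agr p2 z" using E2[of x p2 z] that p by simp
    also have "\<dots> = agr p1 z" using E2[of p1 p2 z] that p by simp
    also have "\<dots> = agr p1 p2" using E1[of p1 p2 z] that p by simp
    also have "\<dots> = agr p1 p3" using E1[of p1 p2 p3] p by simp
    finally show ?thesis .
  qed
  have A12: "agr x y = agr p1 p3" if "x \<in> r" "x \<notin> s" "y \<in> r" "y \<in> s" for x y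
    using E1[of x y p3] A13[of x p3] that p by simp
  have A23: "agr y z = agr p1 p3" if "y \<in> r" "y \<in> s" "z \<in> s" "z \<notin> r" for y z
    using E2[of p1 y z] A13[of p1 z] that p by simp
  have aC: "a \<in> C" and bC: "b \<in> C" using cr rs X.RC unfolding cross_def by blast+
  have ab: "a \<noteq> b" using cr unfolding cross_def by blast
  have sym: "agr a b = agr b a" using agr_sym[OF aC bC ab] .
  have c1: "a \<in> r \<Longrightarrow> a \<notin> s \<Longrightarrow> b \<in> r \<Longrightarrow> b \<in> s \<Longrightarrow> ?thesis" using A12[of a b] by simp
  have c2: "a \<in> r \<Longrightarrow> a \<notin> s \<Longrightarrow> b \<notin> r \<Longrightarrow> b \<in> s \<Longrightarrow> ?thesis" using A13[of a b] by simp
  have c3: "a \<in> r \<Longrightarrow> a \<in> s \<Longrightarrow> b \<notin> r \<Longrightarrow> b \<in> s \<Longrightarrow> ?thesis" using A23[of a b] by simp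
  have c4: "b \<in> r \<Longrightarrow> b \<notin> s \<Longrightarrow> a \<in> r \<Longrightarrow> a \<in> s \<Longrightarrow> ?thesis" using A12[of b a] sym by simp
  have c5: "b \<in> r \<Longrightarrow> b \<notin> s \<Longrightarrow> a \<notin> r \<Longrightarrow> a \<in> s \<Longrightarrow> ?thesis" using A13[of b a] sym by simp
  have c6: "b \<in> r \<Longrightarrow> b \<in> s \<Longrightarrow> a \<notin> r \<Longrightarrow> a \<in> s \<Longrightarrow> ?thesis" using A23[of b a] sym by simp
  show ?thesis
  proof (cases "a \<in> r"; cases "a \<in> s"; cases "b \<in> r"; cases "b \<in> s")
  qed (use c1 c2 c3 c4 c5 c6 cr in \<open>simp_all add: cross_def\<close>)
qed

lemma cross_eq:
  assumes "r \<in> R" "s \<in> R" "overlaps r s" "cross r s a b" "cross r s c d"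
  shows "agr a b = agr c d"
proof -
  obtain p1 p2 p3 where p: "p1 \<in> r" "p1 \<notin> s" "p2 \<in> r" "p2 \<in> s" "p3 \<in> s" "p3 \<notin> r"
    using assms(3) unfolding overlaps_def by blast
  show ?thesis using cross_val[OF assms(1,2) p assms(4)] cross_val[OF assms(1,2) p assms(5)] by simp
qed

lemma rule3:
  assumes "q \<in> R" "a \<in> q" "d \<in> q" "y \<in> C" "y \<notin> q"
  shows "agr a y = agr d y"
proof -
  have C2: "a \<in> C" "d \<in> C" using X.RC assms by blast+
  have ne: "a \<noteq> y" "d \<noteq> y" using assms by auto
  have p: "pos xs a \<noteq> pos xs y" "pos xs d \<noteq> pos xs y" "pos ys a \<noteq> pos ys y" "pos ys d \<noteq> pos ys y"
    using X.pos_ne Y.pos_ne C2 ne assms(4) by auto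
  have "\<not> btw xs a y d" "\<not> btw ys a y d"
    using X.cbtw[OF assms(1,2,3,4)] Y.cbtw[OF assms(1,2,3,4)] assms(5) by blast+
  then show ?thesis using p unfolding agr_def btw_def by arith
qed

context
  fixes r0 s0 a0 b0
  assumes e: "r0 \<in> R" "s0 \<in> R" "overlaps r0 s0" "cross r0 s0 a0 b0"
begin

lemma glob:
  assumes "r \<in> R" "s \<in> R" "overlaps r s" "cross r s a b"
  shows "agr a b = agr a0 b0"
proof -
  have "\<forall>s a b. s \<in> R \<longrightarrow> overlaps r s \<longrightarrow> cross r s a b \<longrightarrow> agr a b = agr a0 b0"
    using X.connD[OF e(1) assms(1)]
  proof (induction rule: rtrancl_induct)
    case base
    show ?case
    proof (intro allI impI)
      fix s a b assume h: "s \<in> R" "overlaps r0 s" "cross r0 s a b"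
      obtain c d where cd: "cross s0 r0 c d" "cross r0 s c d"
        using common_cross[OF _ h(2)] e(3) overlaps_sym by metis
      have "agr c d = agr a0 b0" using cross_eq[OF e(1,2,3)] cd(1) cross_sym e(4) by metis
      moreover have "agr a b = agr c d" using cross_eq[OF e(1) h(1) h(2) h(3) cd(2)] .
      ultimately show "agr a b = agr a0 b0" by simp
    qed
  next
    case (step y z)
    have yz: "y \<in> R" "z \<in> R" "overlaps y z" using graphD[OF step(2)] by auto
    show ?case
    proof (intro allI impI)
      fix s a b assume h: "s \<in> R" "overlaps z s" "cross z s a b"
      obtain c d where cd: "cross y z c d" "cross z s c d"
        using common_cross[OF yz(3) h(2)] by blast
      have "agr c d = agr a0 b0" using step.IH yz cd(1) by blast
      moreover have "agr a b = agr c d" using cross_eq[OF yz(2) h(1) h(2) h(3) cd(2)] .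
      ultimately show "agr a b = agr a0 b0" by simp
    qed
  qed
  then show ?thesis using assms by blast
qed

lemma Ty:
  assumes "(q, s) \<in> (overlap_graph R)\<^sup>*" "y \<in> s" "y \<in> C" "y \<notin> q"
  shows "\<forall>a\<in>q. agr a y = agr a0 b0"
proof -
  have "y \<notin> q \<longrightarrow> (\<forall>a\<in>q. agr a y = agr a0 b0)"
    using assms(1)
  proof (induction rule: converse_rtrancl_induct)
    case base
    then show ?case using assms(2) by blast
  next
    case (step q q')
    have qq: "q \<in> R" "q' \<in> R" "overlaps q q'" using graphD[OF step(1)] by auto
    show ?case
    proof (intro impI ballI)
      fix a assume yq: "y \<notin> q" and a: "a \<in> q"
      show "agr a y = agr a0 b0"
      proof (cases "y \<in> q'")
        case True
        have "cross q q' a y" using True yq a unfolding cross_def by blast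
        then show ?thesis using glob[OF qq] by blast
      next
        case False
        obtain d where d: "d \<in> q" "d \<in> q'" using qq(3) unfolding overlaps_def by blast
        have "agr d y = agr a0 b0" using step.IH False d by blast
        moreover have "agr a y = agr d y" using rule3[OF qq(1) a d(1) assms(3) yq] .
        ultimately show ?thesis by simp
      qed
    qed
  qed
  then show ?thesis using assms(4) by blast
qed

lemma agree_all:
  assumes "x \<in> C" "y \<in> C" "constrained R x" "constrained R y" "\<not> same_venn R x y"
  shows "agr x y = agr a0 b0"
proof -
  obtain r where r: "r \<in> R" "(x \<in> r) \<noteq> (y \<in> r)" using assms(5) unfolding same_venn_def by blast
  show ?thesis
  proof (cases "x \<in> r")
    case True
    obtain s where s: "s \<in> R" "y \<in> s" using assms(4) unfolding constrained_def by blast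
    show ?thesis using Ty[OF X.connD[OF r(1) s(1)] s(2) assms(2)] True r(2) by blast
  next
    case False
    then have yr: "y \<in> r" using r(2) by blast
    obtain s where s: "s \<in> R" "x \<in> s" using assms(3) unfolding constrained_def by blast
    have "agr y x = agr a0 b0" using Ty[OF X.connD[OF r(1) s(1)] s(2) assms(1)] False yr by blast
    moreover have "x \<noteq> y" using assms(5) sv_refl by metis
    ultimately show ?thesis using agr_sym assms(1,2) by metis
  qed
qed

end

lemma key:
  assumes C3: "x \<in> C" "y \<in> C" "z \<in> C" and c: "constrained R x" "constrained R y" "constrained R z"
    and n: "\<not> same_venn R x y" "\<not> same_venn R y z" and bt: "btw xs x y z"
  shows "btw ys x y z"
proof -
  obtain r0 s0 where e: "r0 \<in> R" "s0 \<in> R" "overlaps r0 s0" using X.ex_edge[OF c(1,2) n(1)] by blast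
  obtain a0 b0 where ab: "a0 \<in> r0" "a0 \<notin> s0" "b0 \<in> s0" "b0 \<notin> r0"
    using e(3) unfolding overlaps_def by blast
  have cr: "cross r0 s0 a0 b0" using ab unfolding cross_def by blast
  have "agr x y = agr a0 b0" using agree_all[OF e cr C3(1,2) c(1,2) n(1)] .
  moreover have "agr y z = agr a0 b0" using agree_all[OF e cr C3(2,3) c(2,3) n(2)] .
  ultimately have "agr x y = agr y z" by simp
  moreover have "x \<noteq> y" "y \<noteq> z" using n sv_refl by metis+
  then have "pos ys x \<noteq> pos ys y" "pos ys y \<noteq> pos ys z" using Y.pos_ne C3 by auto
  ultimately show ?thesis using bt unfolding agr_def btw_def by arith
qed

end


lemma sort_pos:
  fixes k :: "'a \<Rightarrow> 'k::linorder"
  assumes inj: "inj_on k (set xs)" and a: "a \<in> set xs" and b: "b \<in> set xs"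
  shows "(pos (sort_key k xs) a < pos (sort_key k xs) b) = (k a < k b)"
proof -
  define ys where "ys = sort_key k xs"
  have sy: "set ys = set xs" unfolding ys_def by simp
  have so: "sorted (map k ys)" unfolding ys_def by simp
  have pa: "pos ys a < length ys" "ys ! pos ys a = a" using pos_props[of a ys] a sy by auto
  have pb: "pos ys b < length ys" "ys ! pos ys b = b" using pos_props[of b ys] b sy by auto
  show ?thesis unfolding ys_def[symmetric]
  proof
    assume lt: "pos ys a < pos ys b"
    then have "a \<noteq> b" by auto
    then have "k a \<noteq> k b" using inj a b unfolding inj_on_def by blast
    moreover have "k a \<le> k b"
      using lt sorted_nth_mono[OF so, of "pos ys a" "pos ys b"] pa pb by simp
    ultimately show "k a < k b" by simp
  next
    assume lt: "k a < k b"
    show "pos ys a < pos ys b"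
    proof (rule ccontr)
      assume "\<not> pos ys a < pos ys b"
      then have "pos ys b \<le> pos ys a" by simp
      then have "k b \<le> k a" using sorted_nth_mono[OF so, of "pos ys b" "pos ys a"] pa pb by simp
      then show False using lt by simp
    qed
  qed
qed

context ord1
begin

lemma row_lemma:
  fixes phi :: "'c \<Rightarrow> int"
  assumes H1: "\<And>c. c \<in> C \<Longrightarrow> constrained R c \<Longrightarrow> 3 * int (mu c) \<le> phi c \<and> phi c \<le> 3 * int (mu c) + 2"
    and H2: "\<And>c. c \<in> C \<Longrightarrow> \<not> constrained R c \<Longrightarrow> phi c < 0 \<or> phi c \<ge> 3 * int (length xs)"
    and r: "r \<in> R" "a \<in> r" "c \<in> r" and b: "b \<in> C" and le: "phi a \<le> phi b" "phi b \<le> phi c"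
  shows "b \<in> r"
proof -
  have C2: "a \<in> C" "c \<in> C" using RC r by blast+
  have ca: "constrained R a" "constrained R c" using r unfolding constrained_def by blast+
  have ml: "mu a < length xs" "mu c < length xs" using mu_props C2 by blast+
  have pa: "3 * int (mu a) \<le> phi a \<and> phi a \<le> 3 * int (mu a) + 2" using H1 C2 ca by blast
  have pc: "3 * int (mu c) \<le> phi c \<and> phi c \<le> 3 * int (mu c) + 2" using H1 C2 ca by blast
  have cb: "constrained R b"
  proof (rule ccontr)
    assume "\<not> constrained R b"
    then have "phi b < 0 \<or> phi b \<ge> 3 * int (length xs)" using H2 b by blast
    then show False using pa pc le ml by linarith
  qed
  have pb: "3 * int (mu b) \<le> phi b \<and> phi b \<le> 3 * int (mu b) + 2" using H1 b cb by blast
  have m1: "mu a \<le> mu b" using pa pb le by presburger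
  have m2: "mu b \<le> mu c" using pc pb le by presburger
  show ?thesis
  proof (cases "mu a = mu b")
    case True
    then have "same_venn R a b" using mu_eq_sv C2 b by blast
    then show ?thesis using r unfolding same_venn_def by blast
  next
    case F1: False
    show ?thesis
    proof (cases "mu b = mu c")
      case True
      then have "same_venn R b c" using mu_eq_sv C2 b by blast
      then show ?thesis using r unfolding same_venn_def by blast
    next
      case False
      then have "pos xs a < pos xs b" "pos xs b < pos xs c"
        using mu_less_pos[OF C2(1) b ca(1) cb] mu_less_pos[OF b C2(2) cb ca(2)] F1 m1 m2 by auto
      then show ?thesis using cbtw[OF r b] unfolding btw_def by blast
    qed
  qed
qed

lemma build:
  fixes phi :: "'c \<Rightarrow> int" and Z :: "'c set"
  assumes H1: "\<And>c. c \<in> C \<Longrightarrow> constrained R c \<Longrightarrow> 3 * int (mu c) \<le> phi c \<and> phi c \<le> 3 * int (mu c) + 2"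
    and H2: "\<And>c. c \<in> C \<Longrightarrow> \<not> constrained R c \<Longrightarrow> phi c < 0 \<or> phi c \<ge> 3 * int (length xs)"
    and HZ: "\<And>a e b. a \<in> Z \<Longrightarrow> e \<in> Z \<Longrightarrow> b \<in> C \<Longrightarrow> phi a \<le> phi b \<Longrightarrow> phi b \<le> phi e \<Longrightarrow> b \<in> Z"
  shows "has_c1p C (R \<union> {Z})"
proof -
  define k where "k = (\<lambda>c. (phi c, pos xs c))"
  define ys where "ys = sort_key k xs"
  have inj: "inj_on k (set xs)"
  proof (rule inj_onI)
    fix a b assume h: "a \<in> set xs" "b \<in> set xs" "k a = k b"
    then have "pos xs a = pos xs b" unfolding k_def by simp
    then show "a = b" using pos_inj[OF h(1,2)] by blast
  qed
  have dy: "distinct ys" unfolding ys_def using dist by simp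
  have sy: "set ys = C" unfolding ys_def using setx by simp
  have ord: "(pos ys a < pos ys b) = (k a < k b)" if "a \<in> C" "b \<in> C" for a b
    unfolding ys_def using sort_pos[OF inj] that setx by blast
  have le: "phi a \<le> phi b" if "a \<in> C" "b \<in> C" "pos ys a < pos ys b" for a b
    using ord[OF that(1,2)] that(3) unfolding k_def by auto
  have cv_all: "conv ys r" if r: "r \<in> R \<union> {Z}" for r
    unfolding conv_def
  proof (intro allI impI)
    fix a b c assume h: "a \<in> r" "c \<in> r" "a \<in> set ys" "b \<in> set ys" "c \<in> set ys"
      "pos ys a < pos ys b" "pos ys b < pos ys c"
    have l1: "phi a \<le> phi b" using le h sy by blast
    have l2: "phi b \<le> phi c" using le h sy by blast
    show "b \<in> r"
    proof (cases "r = Z")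
      case True then show ?thesis using HZ h l1 l2 sy by blast
    next
      case False
      then have "r \<in> R" using r by blast
      then show ?thesis using row_lemma[OF H1 H2 _ h(1) h(2) _ l1 l2] h sy by blast
    qed
  qed
  have "c1p_ordering C (R \<union> {Z}) ys"
    unfolding c1p_ordering_def using dy sy cv_all conv_consec[OF dy] by blast
  then show ?thesis unfolding has_c1p_def by blast
qed

end


lemma uc_iff: "c \<in> unconstrained_class C R \<longleftrightarrow> c \<in> C \<and> \<not> constrained R c"
  unfolding unconstrained_class_def constrained_def by blast

locale bkw = ord1 +
  fixes Z :: "'a set"
  assumes ZC: "Z \<subseteq> C" and n101: "\<not> config_101 R xs Z"
    and n010: "config_010 R xs Z \<Longrightarrow> Z \<inter> unconstrained_class C R = {}"
begin

lemma mk_cfg: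
  assumes C3: "x \<in> C" "y \<in> C" "z \<in> C" and c: "constrained R x" "constrained R y" "constrained R z"
    and m: "mu x < mu y" "mu y < mu z"
  shows "three_constrained_classes R x y z \<and>
    pos xs x < pos xs y \<and> pos xs y < pos xs z \<and> pos xs z < length xs \<and>
    xs ! pos xs x = x \<and> xs ! pos xs y = y \<and> xs ! pos xs z = z"
proof -
  have sv: "\<not> same_venn R x y" "\<not> same_venn R x z" "\<not> same_venn R y z"
    using mu_eq[of x y] mu_eq[of x z] mu_eq[of y z] m by auto
  have p: "pos xs x < pos xs y" "pos xs y < pos xs z"
    using mu_less_pos[OF C3(1,2) c(1,2) m(1)] mu_less_pos[OF C3(2,3) c(2,3) m(2)] by auto
  have n: "xs ! pos xs x = x" "xs ! pos xs y = y" "xs ! pos xs z = z" "pos xs z < length xs"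
    using pos_props[of x xs] pos_props[of y xs] pos_props[of z xs] C3 setx by auto
  show ?thesis using sv p n c unfolding three_constrained_classes_def by simp
qed

lemma mk101:
  assumes "x \<in> C" "y \<in> C" "z \<in> C" "constrained R x" "constrained R y" "constrained R z"
    "mu x < mu y" "mu y < mu z" "x \<in> Z" "y \<notin> Z" "z \<in> Z"
  shows False
proof -
  have "config_101 R xs Z"
    unfolding config_101_def
    apply (rule exI[of _ "pos xs x"], rule exI[of _ "pos xs y"], rule exI[of _ "pos xs z"])
    using mk_cfg[OF assms(1-8)] assms(9-11) by simp
  then show False using n101 by simp
qed

lemma mk010:
  assumes "x \<in> C" "y \<in> C" "z \<in> C" "constrained R x" "constrained R y" "constrained R z"
    "mu x < mu y" "mu y < mu z" "x \<notin> Z" "y \<in> Z" "z \<notin> Z"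
    and U: "Z \<inter> unconstrained_class C R \<noteq> {}"
  shows False
proof -
  have "config_010 R xs Z"
    unfolding config_010_def
    apply (rule exI[of _ "pos xs x"], rule exI[of _ "pos xs y"], rule exI[of _ "pos xs z"])
    using mk_cfg[OF assms(1-8)] assms(9-11) by simp
  then show False using n010 U by simp
qed

lemma case_empty:
  assumes E: "\<forall>c\<in>Z. \<not> constrained R c"
  shows "has_c1p C (R \<union> {Z})"
proof -
  define phi where "phi c = (if constrained R c then 3 * int (mu c) else if c \<in> Z then -1 else 3 * int (length xs))" for c
  show ?thesis
  proof (rule build[of phi Z])
    fix c assume "c \<in> C" "constrained R c"
    then show "3 * int (mu c) \<le> phi c \<and> phi c \<le> 3 * int (mu c) + 2" unfolding phi_def by simp
  next
    fix c assume "c \<in> C" "\<not> constrained R c"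
    then show "phi c < 0 \<or> phi c \<ge> 3 * int (length xs)" unfolding phi_def by simp
  next
    fix a e b assume h: "a \<in> Z" "e \<in> Z" "b \<in> C" "phi a \<le> phi b" "phi b \<le> phi e"
    have "phi e = -1" using E h(2) unfolding phi_def by simp
    moreover have "phi a = -1" using E h(1) unfolding phi_def by simp
    ultimately have "phi b = -1" using h by simp
    then show "b \<in> Z" unfolding phi_def by (auto split: if_splits)
  qed
qed

lemma case_nonempty:
  assumes NE: "\<exists>c\<in>Z. constrained R c"
  shows "has_c1p C (R \<union> {Z})"
proof -
  define Zc where "Zc = {c \<in> Z. constrained R c}"
  define P where "P = pos xs ` Zc"
  have finP: "finite P" unfolding P_def Zc_def using ZC finite_subset[of _ C] setx
    by (metis (no_types, lifting) List.finite_set finite_imageI mem_Collect_eq subsetI subset_iff)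
  have neP: "P \<noteq> {}" using NE unfolding P_def Zc_def by blast
  define lo where "lo = Min P"
  define hi where "hi = Max P"
  have loP: "lo \<in> P" and hiP: "hi \<in> P" unfolding lo_def hi_def using finP neP by auto
  define clo where "clo = xs ! lo"
  define chi where "chi = xs ! hi"
  have cloZ: "clo \<in> Z" "constrained R clo" "clo \<in> C" "pos xs clo = lo"
  proof -
    obtain c where c: "c \<in> Zc" "lo = pos xs c" using loP unfolding P_def by blast
    have "c \<in> C" using c ZC unfolding Zc_def by blast
    then have "xs ! pos xs c = c" using pos_props[of c xs] setx by auto
    then have "clo = c" unfolding clo_def using c by simp
    then show "clo \<in> Z" "constrained R clo" "clo \<in> C" "pos xs clo = lo" using c \<open>c \<in> C\<close> unfolding Zc_def by auto
  qed
  have chiZ: "chi \<in> Z" "constrained R chi" "chi \<in> C" "pos xs chi = hi"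
  proof -
    obtain c where c: "c \<in> Zc" "hi = pos xs c" using hiP unfolding P_def by blast
    have "c \<in> C" using c ZC unfolding Zc_def by blast
    then have "xs ! pos xs c = c" using pos_props[of c xs] setx by auto
    then have "chi = c" unfolding chi_def using c by simp
    then show "chi \<in> Z" "constrained R chi" "chi \<in> C" "pos xs chi = hi" using c \<open>c \<in> C\<close> unfolding Zc_def by auto
  qed
  define ml where "ml = mu clo"
  define mh where "mh = mu chi"
  have Zc_mu: "ml \<le> mu c \<and> mu c \<le> mh" if "c \<in> Z" "constrained R c" for c
  proof -
    have cC: "c \<in> C" using that ZC by blast
    have "pos xs c \<in> P" unfolding P_def Zc_def using that by blast
    then have "lo \<le> pos xs c" "pos xs c \<le> hi" unfolding lo_def hi_def using finP by auto
    then show ?thesis unfolding ml_def mh_def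
      using mu_mono[OF cloZ(3) cC cloZ(2) that(2)] mu_mono[OF cC chiZ(3) that(2) chiZ(2)] cloZ(4) chiZ(4)
      by simp
  qed
  have mlh: "ml \<le> mh" using Zc_mu[OF cloZ(1,2)] unfolding ml_def by simp
  have F1: False if "c \<in> C" "constrained R c" "c \<notin> Z" "ml < mu c" "mu c < mh" for c
    using mk101[OF cloZ(3) that(1) chiZ(3) cloZ(2) that(2) chiZ(2) _ _ cloZ(1) that(3) chiZ(1)]
      that(4,5) unfolding ml_def mh_def by blast
  define U where "U = (Z \<inter> unconstrained_class C R \<noteq> {})"
  define left where "left = (U \<and> (\<forall>c\<in>C. constrained R c \<and> c \<notin> Z \<longrightarrow> mu c > ml \<or> (mu c = ml \<and> ml = mh)))"
  define phi where "phi c = (if constrained R c then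
      (if c \<in> Z then 3 * int (mu c) + 1
       else if mu c < ml \<or> (mu c = ml \<and> (ml \<noteq> mh \<or> \<not> left)) then 3 * int (mu c) else 3 * int (mu c) + 2)
     else (if (c \<in> Z) = left then -1 else 3 * int (length xs)))" for c
  have phiZc: "phi c = 3 * int (mu c) + 1" if "c \<in> Z" "constrained R c" for c
    using that unfolding phi_def by simp
  have phiU: "phi c = (if (c \<in> Z) = left then -1 else 3 * int (length xs))" if "\<not> constrained R c" for c
    using that unfolding phi_def by simp
  have phiB: "0 \<le> phi c \<and> phi c < 3 * int (length xs)" if "c \<in> C" "constrained R c" for c
  proof -
    have "mu c < length xs" using mu_props that by blast
    then show ?thesis unfolding phi_def using that by auto
  qed
  have LS: "phi b \<ge> 3 * int mh + 2" if "left" "b \<in> C" "constrained R b" "b \<notin> Z" for b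
  proof -
    have d: "mu b > ml \<or> (mu b = ml \<and> ml = mh)" using that unfolding left_def by blast
    then have "phi b = 3 * int (mu b) + 2" unfolding phi_def using that by auto
    moreover have "mu b \<ge> mh"
    proof (rule ccontr)
      assume "\<not> mu b \<ge> mh"
      then show False using d F1[OF that(2,3,4)] by auto
    qed
    ultimately show ?thesis by simp
  qed
  have phiNL: "phi b = (if mu b \<le> ml then 3 * int (mu b) else 3 * int (mu b) + 2)"
    if "\<not> left" "constrained R b" "b \<notin> Z" for b
    using that unfolding phi_def by auto
  have G: "mu b \<le> ml" if U: "U" and nl: "\<not> left" and b: "b \<in> C" "constrained R b" "b \<notin> Z" for b
  proof (rule ccontr)
    assume "\<not> mu b \<le> ml"
    then have bgt: "mu b > ml" by simp
    obtain d where d: "d \<in> C" "constrained R d" "d \<notin> Z" "\<not> (mu d > ml \<or> (mu d = ml \<and> ml = mh))"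
      using U nl unfolding left_def by blast
    have U': "Z \<inter> unconstrained_class C R \<noteq> {}" using U unfolding U_def .
    show False
    proof (cases "mu d < ml")
      case True
      show False using mk010[OF d(1) cloZ(3) b(1) d(2) cloZ(2) b(2) _ _ d(3) cloZ(1) b(3) U'] True bgt
        unfolding ml_def by blast
    next
      case False
      then have dml: "mu d = ml" "ml < mh" using d(4) mlh by auto
      show False
      proof (cases "mu b > mh")
        case True
        show False using mk010[OF d(1) chiZ(3) b(1) d(2) chiZ(2) b(2) _ _ d(3) chiZ(1) b(3) U'] True dml
          unfolding mh_def by auto
      next
        case False
        have "\<not> mu b < mh" using F1[OF b] bgt by blast
        then have bmh: "mu b = mh" using False by simp
        have "\<not> same_venn R d b" using mu_eq[of d b] bmh dml by auto
        then obtain w where w: "w \<in> C" "constrained R w" "\<not> same_venn R w d" "\<not> same_venn R w b"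
          using three_classes[OF d(2) b(2)] by blast
        have wne: "mu w \<noteq> ml" "mu w \<noteq> mh"
          using mu_eq_sv[OF w(1) d(1)] mu_eq_sv[OF w(1) b(1)] w(3,4) dml bmh by auto
        consider "mu w < ml" | "ml < mu w \<and> mu w < mh" | "mu w > mh" using wne by linarith
        then show False
        proof cases
          case 1
          then have "w \<notin> Z" using Zc_mu[of w] w(2) by fastforce
          then show False using mk010[OF w(1) cloZ(3) b(1) w(2) cloZ(2) b(2) _ _ _ cloZ(1) b(3) U'] 1 bgt
            unfolding ml_def by blast
        next
          case 2
          then have "w \<in> Z" using F1[OF w(1,2)] by blast
          then show False using mk010[OF d(1) w(1) b(1) d(2) w(2) b(2) _ _ d(3) _ b(3) U'] 2 dml bmh
            by auto
        next
          case 3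
          then have "w \<notin> Z" using Zc_mu[of w] w(2) by fastforce
          then show False using mk010[OF d(1) chiZ(3) w(1) d(2) chiZ(2) w(2) _ _ d(3) chiZ(1) _ U'] 3 dml
            unfolding mh_def by auto
        qed
      qed
    qed
  qed
  show ?thesis
  proof (rule build[of phi Z])
    fix c assume "c \<in> C" "constrained R c"
    then show "3 * int (mu c) \<le> phi c \<and> phi c \<le> 3 * int (mu c) + 2" unfolding phi_def by simp
  next
    fix c assume "c \<in> C" "\<not> constrained R c"
    then show "phi c < 0 \<or> phi c \<ge> 3 * int (length xs)" unfolding phi_def by simp
  next
    fix a e b assume h: "a \<in> Z" "e \<in> Z" "b \<in> C" "phi a \<le> phi b" "phi b \<le> phi e"
    have aC: "a \<in> C" and eC: "e \<in> C" using h ZC by blast+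
    have Ua: "U" if "\<not> constrained R a" using that h(1) aC uc_iff[of a] unfolding U_def by blast
    have Ue: "U" if "\<not> constrained R e" using that h(2) eC uc_iff[of e] unfolding U_def by blast
    show "b \<in> Z"
    proof (rule ccontr)
      assume bZ: "b \<notin> Z"
      show False
      proof (cases "constrained R b")
        case False
        then have pb: "phi b = (if left then 3 * int (length xs) else -1)" using phiU bZ by simp
        show False
        proof (cases left)
          case True
          show False
          proof (cases "constrained R e")
            case True then show False using phiB[OF eC True] pb h(5) \<open>left\<close> by simp
          next
            case False then show False using phiU[OF False] h(2) pb h(5) \<open>left\<close> by simp
          qed
        next
          case False
          show False
          proof (cases "constrained R a")
            case True then show False using phiB[OF aC True] pb h(4) \<open>\<not> left\<close> by simp
          next
            case F: False then show False using phiU[OF F] h(1) pb h(4) \<open>\<not> left\<close> by simp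
          qed
        qed
      next
        case cb: True
        show False
        proof (cases left)
          case True
          have "phi b \<ge> 3 * int mh + 2" using LS[OF True h(3) cb bZ] .
          show False
          proof (cases "constrained R e")
            case ce: True
            then show False using phiZc[OF h(2) ce] Zc_mu[OF h(2) ce] h(5) \<open>phi b \<ge> 3 * int mh + 2\<close> by linarith
          next
            case False then show False using phiU[OF False] h(2) h(5) True phiB[OF h(3) cb] by simp
          qed
        next
          case nl: False
          show False
          proof (cases U)
            case True
            have "mu b \<le> ml" using G[OF True nl h(3) cb bZ] .
            then have pb: "phi b = 3 * int (mu b)" using phiNL[OF nl cb bZ] by simp
            show False
            proof (cases "constrained R a")
              case ca: True
              then show False using phiZc[OF h(1) ca] Zc_mu[OF h(1) ca] h(4) pb \<open>mu b \<le> ml\<close> by linarith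
            next
              case False then show False using phiU[OF False] h(1) h(4) nl pb phiB[OF h(3) cb] by simp
            qed
          next
            case False
            then have ca: "constrained R a" and ce: "constrained R e" using Ua Ue by blast+
            have A: "phi a \<ge> 3 * int ml + 1" using phiZc[OF h(1) ca] Zc_mu[OF h(1) ca] by simp
            have E: "phi e \<le> 3 * int mh + 1" using phiZc[OF h(2) ce] Zc_mu[OF h(2) ce] by simp
            show False
            proof (cases "mu b \<le> ml")
              case True
              then show False using phiNL[OF nl cb bZ] A h(4) by simp
            next
              case False
              then have "phi b = 3 * int (mu b) + 2" using phiNL[OF nl cb bZ] by simp
              then have "mu b < mh" using E h(5) by simp
              then show False using F1[OF h(3) cb bZ] False by simp
            qed
          qed
        qed
      qed
    qed
  qed
qed

lemma back_c1p: "has_c1p C (R \<union> {Z})"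
  using case_empty case_nonempty by blast

end

theorem mainTheorem8:
  fixes C :: "'c set" and R :: "'c set set" and cs :: "'c list" and Z :: "'c set"
  assumes "finite C"
    and "\<forall>r\<in>R. r \<subseteq> C"
    and "R \<noteq> {}"
    and "has_c1p C R"
    and "overlap_connected R"
    and "c1p_ordering C R cs"
    and "Z \<subseteq> C"
    and "Z \<notin> R"
  shows "\<not> has_c1p C (R \<union> {Z}) \<longleftrightarrow>
           (config_101 R cs Z \<or>
            (config_010 R cs Z \<and> Z \<inter> unconstrained_class C R \<noteq> {}))"
proof -
  have cs: "distinct cs" "set cs = C" "\<forall>r\<in>R. consecutive_in cs r"
    using assms(6) unfolding c1p_ordering_def by auto
  interpret X: ord1 C R cs
  proof
    show "distinct cs" "set cs = C" "overlap_connected R" using cs assms(5) by auto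
    fix r assume "r \<in> R"
    then show "r \<subseteq> C" "conv cs r" using assms(2) cs consec_conv[OF cs(1)] by auto
  qed
  show ?thesis
  proof
    assume nc: "\<not> has_c1p C (R \<union> {Z})"
    show "config_101 R cs Z \<or> (config_010 R cs Z \<and> Z \<inter> unconstrained_class C R \<noteq> {})"
    proof (rule ccontr)
      assume nn: "\<not> (config_101 R cs Z \<or> (config_010 R cs Z \<and> Z \<inter> unconstrained_class C R \<noteq> {}))"
      interpret B: bkw C R cs Z
        using assms(7) nn by unfold_locales auto
      show False using B.back_c1p nc by simp
    qed
  next
    assume cf: "config_101 R cs Z \<or> (config_010 R cs Z \<and> Z \<inter> unconstrained_class C R \<noteq> {})"
    show "\<not> has_c1p C (R \<union> {Z})"
    proof
      assume "has_c1p C (R \<union> {Z})"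
      then obtain ys where ys: "c1p_ordering C (R \<union> {Z}) ys" unfolding has_c1p_def by blast
      have yd: "distinct ys" "set ys = C" "\<forall>r\<in>R \<union> {Z}. consecutive_in ys r"
        using ys unfolding c1p_ordering_def by auto
      have cvZ: "conv ys Z" using yd consec_conv[OF yd(1)] by blast
      have o1: "ord1 C R cs"
        unfolding ord1_def using cs assms(2,5) consec_conv[OF cs(1)] by auto
      have o2: "ord1 C R ys"
        unfolding ord1_def using yd assms(2,5) consec_conv[OF yd(1)] by auto
      interpret T: two_ord C R cs ys using o1 o2 by (rule two_ord.intro)
      have trip: "btw ys (cs ! h) (cs ! i) (cs ! j)"
        if hij: "h < i" "i < j" "j < length cs"
          and tc: "three_constrained_classes R (cs ! h) (cs ! i) (cs ! j)" for h i j
      proof -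
        have C3: "cs ! h \<in> C" "cs ! i \<in> C" "cs ! j \<in> C" using hij cs(2) nth_mem by auto
        have "btw cs (cs ! h) (cs ! i) (cs ! j)"
          using hij pos_nth[OF cs(1)] unfolding btw_def by auto
        then show ?thesis
          using T.key[OF C3] tc unfolding three_constrained_classes_def by blast
      qed
      from cf show False
      proof
        assume "config_101 R cs Z"
        then obtain h i j where hij: "h < i" "i < j" "j < length cs"
          and tc: "three_constrained_classes R (cs ! h) (cs ! i) (cs ! j)"
          and m: "cs ! h \<in> Z" "cs ! i \<notin> Z" "cs ! j \<in> Z"
          unfolding config_101_def by blast
        have C3: "cs ! h \<in> C" "cs ! i \<in> C" "cs ! j \<in> C" using hij cs(2) nth_mem by auto
        have "cs ! i \<in> Z" using conv_btw[OF cvZ m(1) m(3)] C3 yd(2) trip[OF hij tc] by blast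
        then show False using m by blast
      next
        assume "config_010 R cs Z \<and> Z \<inter> unconstrained_class C R \<noteq> {}"
        then obtain h i j u where hij: "h < i" "i < j" "j < length cs"
          and tc: "three_constrained_classes R (cs ! h) (cs ! i) (cs ! j)"
          and m: "cs ! h \<notin> Z" "cs ! i \<in> Z" "cs ! j \<notin> Z"
          and u: "u \<in> Z" "u \<in> unconstrained_class C R"
          unfolding config_010_def by blast
        define x where "x = cs ! h"
        define y where "y = cs ! i"
        define z where "z = cs ! j"
        have C3: "x \<in> C" "y \<in> C" "z \<in> C" unfolding x_def y_def z_def using hij cs(2) nth_mem by auto
        have b: "btw ys x y z" unfolding x_def y_def z_def using trip[OF hij tc] .
        have cc: "constrained R x" "constrained R y" "constrained R z"
          using tc unfolding three_constrained_classes_def x_def y_def z_def by auto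
        have uC: "u \<in> C" "\<not> constrained R u" using u uc_iff[of u C R] by auto
        have une: "u \<noteq> x" "u \<noteq> y" "u \<noteq> z" using cc uC by auto
        have p: "pos ys u \<noteq> pos ys x" "pos ys u \<noteq> pos ys y" "pos ys u \<noteq> pos ys z"
          using T.Y.pos_ne une C3 uC by auto
        obtain rx where rx: "rx \<in> R" "x \<in> rx" using cc unfolding constrained_def by blast
        obtain rz where rz: "rz \<in> R" "z \<in> rz" using cc unfolding constrained_def by blast
        have n1: "\<not> btw ys x u z" using T.Y.union_conv[OF rx rz uC(1)] uC(2) by blast
        have n2: "\<not> btw ys u x y" using conv_btw[OF cvZ u(1) m(2)] C3 uC yd(2) m(1)
          unfolding x_def y_def by blast
        have n3: "\<not> btw ys u z y" using conv_btw[OF cvZ u(1) m(2)] C3 uC yd(2) m(3)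
          unfolding z_def y_def by blast
        show False using b n1 n2 n3 p unfolding btw_def by arith
      qed
    qed
  qed
qed

end
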